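(* For $d\geq 0$ and $n\geq 1$ let $\sigma_d(n)=\sum_{\ell\mid n}\ell^d$. For $n\geq 3$ define \[ D^{\sigma}(n):=\begin{cases} 2n\log_{9/8}(3), & n\equiv 0\pmod 3,\\ (2n+1)\log_{9/8}(3)-\log_{9/8}(n+2), & n\equiv 1\pmod 3,\\ \log_{9/8}(2)+(n+1)\log_{9/8}(3), & n\equiv 2\pmod 3,\ n\neq 5,\\ \log_{9/8}(3888), & n=5. \end{cases} \] Let $n\geq 3$ and let $d$ be an integer with $d>D^{\sigma}(n)$. Then \[ \frac{\bigl(q^{\sigma_d}(n)\bigr)^2}{q^{\sigma_d}(n-1)\,q^{\sigma_d}(n+1)}<1 \quad\text{if and only if}\quad n\equiv 1\pmod 3 . \]
   Context: For a double sequence $\{g_d(n)\}_{d\geq 0,n\geq 1}$ of positive reals, the numbers $q^{g_d}(n)$ ($n\geq 0$) are defined as the coefficients of the power series \[ \sum_{n=0}^{\infty} q^{g_d}(n)\,t^n := \frac{1}{1-\sum_{n=1}^{\infty} g_d(n)\,t^n}. \] Here $g_d=\sigma_d$, i.e. $\sum_n q^{\sigma_d}(n)t^n = 1/(1-\sum_{n\ge1} \sigma_d(n) t^n)$. $\log_{9/8}$ denotes the logarithm to base $9/8$. *)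

theory Defs
  imports "HOL-Analysis.Analysis" "HOL-Computational_Algebra.Formal_Power_Series"
begin

definition sigma :: "nat \<Rightarrow> nat \<Rightarrow> real" where
  "sigma d n = (\<Sum>l\<in>{l. l dvd n}. real l ^ d)"

definition qg :: "(nat \<Rightarrow> real) \<Rightarrow> nat \<Rightarrow> real" where
  "qg g n = fps_nth (inverse (1 - Abs_fps (\<lambda>k. if k = 0 then 0 else g k))) n"

definition Dsigma :: "nat \<Rightarrow> real" where
  "Dsigma n =
    (if n mod 3 = 0 then 2 * real n * log (9/8) 3
     else if n mod 3 = 1 then (2 * real n + 1) * log (9/8) 3 - log (9/8) (real n + 2)
     else if n = 5 then log (9/8) 3888
     else log (9/8) 2 + (real n + 1) * log (9/8) 3)"

end

theory Submission
  imports Defs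
begin


lemma qg_0: "qg g 0 = 1"
  by (simp add: qg_def)

lemma qg_rec:
  assumes "n > 0"
  shows "qg g n = (\<Sum>j=1..n. g j * qg g (n-j))"
proof -
  define F where "F = 1 - Abs_fps (\<lambda>k. if k = 0 then 0 else g k)"
  have F0: "fps_nth F 0 = 1" by (simp add: F_def)
  have "F * inverse F = 1" using F0 by (intro inverse_mult_eq_1') simp
  hence "fps_nth (F * inverse F) n = 0" using assms by simp
  hence "(\<Sum>i=0..n. fps_nth F i * fps_nth (inverse F) (n-i)) = 0" by (simp add: fps_mult_nth)
  hence "fps_nth F 0 * fps_nth (inverse F) n + (\<Sum>i=Suc 0..n. fps_nth F i * fps_nth (inverse F) (n-i)) = 0"
    by (simp add: sum.atLeast_Suc_atMost)
  moreover have "(\<Sum>i=Suc 0..n. fps_nth F i * fps_nth (inverse F) (n-i)) = - (\<Sum>i=1..n. g i * fps_nth (inverse F) (n-i))"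
    by (simp add: F_def sum_negf[symmetric])
  ultimately have "fps_nth (inverse F) n = (\<Sum>i=1..n. g i * fps_nth (inverse F) (n-i))"
    using F0 by simp
  thus ?thesis by (simp add: qg_def F_def)
qed

lemma sigma_ge: assumes "j > 0" shows "sigma d j \<ge> real j ^ d"
  unfolding sigma_def
  by (rule member_le_sum) (use assms in auto)

lemma sigma_nonneg: "sigma d j \<ge> 0"
  unfolding sigma_def by (intro sum_nonneg) auto

lemma sigma_le: assumes "j > 0" shows "sigma d j \<le> real j ^ d + real j * (real j / 2) ^ d"
proof -
  define D where "D = {l. l dvd j \<and> l \<noteq> j}"
  have fin: "finite D" unfolding D_def
    by (rule finite_subset[of _ "{..j}"]) (use assms in \<open>auto dest: dvd_imp_le\<close>)
  have eq: "{l. l dvd j} = insert j D" by (auto simp: D_def)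
  have "sigma d j = real j ^ d + (\<Sum>l\<in>D. real l ^ d)"
    unfolding sigma_def eq using fin by (simp add: D_def)
  also have "(\<Sum>l\<in>D. real l ^ d) \<le> real (card D) * (real j / 2) ^ d"
  proof (rule sum_bounded_above)
    fix l assume "l \<in> D"
    then obtain c where c: "j = l * c" and "l \<noteq> j" by (auto simp: D_def)
    hence "c \<noteq> 1" by auto
    moreover have "c \<noteq> 0" using c assms by auto
    ultimately have "c \<ge> 2" by linarith
    hence "2 * l \<le> j" using c by (metis mult.commute mult_le_mono2)
    hence "real l \<le> real j / 2" by simp
    thus "real l ^ d \<le> (real j / 2) ^ d" by (intro power_mono) auto
  qed
  also have "real (card D) \<le> real j"
  proof -
    have "D \<subseteq> {1..j}" using assms by (auto simp: D_def dest: dvd_imp_le intro: Nat.gr0I)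
    hence "card D \<le> card {1..j}" by (intro card_mono) auto
    thus ?thesis by simp
  qed
  hence "real (card D) * (real j / 2) ^ d \<le> real j * (real j / 2) ^ d"
    by (intro mult_right_mono) auto
  finally show ?thesis by simp
qed

lemma sigma_le2: assumes "j > 0" "j \<le> 2^d" shows "sigma d j \<le> 2 * real j ^ d"
proof -
  have "real j * (real j / 2) ^ d = real j * real j ^ d / 2 ^ d" by (simp add: power_divide)
  also have "\<dots> \<le> real j ^ d"
  proof -
    have "real j \<le> 2^d" using assms(2) by (metis of_nat_le_iff of_nat_numeral of_nat_power)
    hence "real j * real j ^ d \<le> 2^d * real j ^ d" by (intro mult_right_mono) auto
    thus ?thesis by (simp add: divide_le_eq mult.commute)
  qed
  finally show ?thesis using sigma_le[OF assms(1), of d] by simp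
qed

fun M :: "nat \<Rightarrow> nat" where
  "M 0 = 1" | "M (Suc 0) = 1" | "M (Suc (Suc 0)) = 2" | "M (Suc (Suc (Suc 0))) = 3"
| "M (Suc (Suc (Suc (Suc 0)))) = 4"
| "M (Suc (Suc (Suc (Suc (Suc m))))) = 3 * M (Suc (Suc m))"

lemma M_step: "m \<ge> 2 \<Longrightarrow> M (m + 3) = 3 * M m"
  by (cases m rule: M.cases) (auto simp: numeral_eq_Suc)

lemma M_ge3: "M (m + 3) \<ge> 3 * M m"
  by (cases m rule: M.cases) (auto simp: numeral_eq_Suc)

lemma M_vals: "M 0 = 1" "M 1 = 1" "M 2 = 2" "M 3 = 3" "M 4 = 4" "M 5 = 6" "M 6 = 9" "M 7 = 12"
  "M 8 = 18" "M 9 = 27" "M 10 = 36" "M 11 = 54"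
  by (simp_all add: numeral_eq_Suc)

lemma M_pos: "M m > 0"
  by (induction m rule: M.induct) auto

lemma M_closed: "M (3*k) = 3^k" "M (3*k+2) = 2*3^k" "M (3*k+4) = 4*3^k"
proof -
  show "M (3*k) = 3^k"
  proof (induction k)
    case (Suc k) show ?case
    proof (cases k)
      case 0 thus ?thesis by (simp add: M_vals)
    next
      case (Suc k') hence "M (3*k + 3) = 3 * M (3*k)" by (intro M_step) auto
      thus ?thesis using Suc.IH by (simp add: add.commute)
    qed
  qed simp
  show "M (3*k+2) = 2*3^k"
  proof (induction k)
    case (Suc k)
    have "M (3*k+2 + 3) = 3 * M (3*k+2)" by (intro M_step) auto
    thus ?case using Suc.IH by (simp add: algebra_simps)
  qed (simp add: M_vals)
  show "M (3*k+4) = 4*3^k"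
  proof (induction k)
    case (Suc k)
    have "M (3*k+4 + 3) = 3 * M (3*k+4)" by (intro M_step) auto
    thus ?case using Suc.IH by (simp add: algebra_simps)
  qed (simp add: M_vals)
qed




definition opt :: "nat \<Rightarrow> nat \<Rightarrow> bool" where
  "opt m j \<longleftrightarrow> (m = 1 \<and> j = 1) \<or> (m = 2 \<and> j = 2) \<or> (m = 4 \<and> (j = 2 \<or> j = 4))
     \<or> (m \<ge> 3 \<and> m mod 3 = 0 \<and> j = 3) \<or> (m \<ge> 5 \<and> m mod 3 = 2 \<and> (j = 2 \<or> j = 3))
     \<or> (m \<ge> 7 \<and> m mod 3 = 1 \<and> (j = 2 \<or> j = 3 \<or> j = 4))"

definition P where "P m j \<longleftrightarrow> (opt m j \<longrightarrow> j * M (m-j) = M m) \<and> (\<not> opt m j \<longrightarrow> 9 * j * M (m-j) \<le> 8 * M m)"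

lemma tab1: "P 1 1"
  by (simp_all add: P_def opt_def M_vals)

lemma tab2: "P 2 1" "P 2 2"
  by (simp_all add: P_def opt_def M_vals)

lemma tab3: "P 3 1" "P 3 2" "P 3 3"
  by (simp_all add: P_def opt_def M_vals)

lemma tab4: "P 4 1" "P 4 2" "P 4 3" "P 4 4"
  by (simp_all add: P_def opt_def M_vals)

lemma tab5: "P 5 1" "P 5 2" "P 5 3" "P 5 4" "P 5 5"
  by (simp_all add: P_def opt_def M_vals)

lemma tab6: "P 6 1" "P 6 2" "P 6 3" "P 6 4" "P 6 5" "P 6 6"
  by (simp_all add: P_def opt_def M_vals)

lemma tab7: "P 7 1" "P 7 2" "P 7 3" "P 7 4" "P 7 5" "P 7 6" "P 7 7"
  by (simp_all add: P_def opt_def M_vals)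

lemma tab8: "P 8 1" "P 8 2" "P 8 3" "P 8 4" "P 8 5" "P 8 6" "P 8 7"
  by (simp_all add: P_def opt_def M_vals)

lemma tab9: "P 9 1" "P 9 2" "P 9 3" "P 9 4" "P 9 5" "P 9 6" "P 9 7"
  by (simp_all add: P_def opt_def M_vals)

lemma tab10: "P 10 1" "P 10 2" "P 10 3" "P 10 4" "P 10 5" "P 10 6" "P 10 7"
  by (simp_all add: P_def opt_def M_vals)

lemma tab11: "P 11 1" "P 11 2" "P 11 3" "P 11 4" "P 11 5" "P 11 6" "P 11 7"
  by (simp_all add: P_def opt_def M_vals)
lemma All_less_num: "(\<forall>i < numeral k. Q i) = (Q (pred_numeral k) \<and> (\<forall>i<pred_numeral k. Q i))"
  by (simp only: numeral_eq_Suc All_less_Suc)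
lemma base0: "\<forall>m < 12. \<forall>j < 8. 1 \<le> j \<longrightarrow> j \<le> m \<longrightarrow> P m j"
  by (simp add: All_less_num tab1 tab2 tab3 tab4 tab5 tab6 tab7 tab8 tab9 tab10 tab11 tab1(1)[unfolded One_nat_def] tab2(1)[unfolded One_nat_def] tab3(1)[unfolded One_nat_def] tab4(1)[unfolded One_nat_def] tab5(1)[unfolded One_nat_def] tab6(1)[unfolded One_nat_def] tab7(1)[unfolded One_nat_def] tab8(1)[unfolded One_nat_def] tab9(1)[unfolded One_nat_def] tab10(1)[unfolded One_nat_def] tab11(1)[unfolded One_nat_def])
lemma base: assumes "m \<le> 11" "1 \<le> j" "j \<le> 7" "j \<le> m" shows "P m j"
  using base0 assms by auto
lemma opt_le4: "opt m j \<Longrightarrow> j \<le> 4" by (auto simp: opt_def)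

lemma opt_small:
  "1 \<le> j \<Longrightarrow> j \<le> 7 \<Longrightarrow> j \<le> m \<Longrightarrow>
    (opt m j \<longrightarrow> j * M (m-j) = M m) \<and> (\<not> opt m j \<longrightarrow> 9 * j * M (m-j) \<le> 8 * M m)"
proof (induction m rule: less_induct)
  case (less m)
  show ?case
  proof (cases "m \<ge> 12")
    case True
    have IH: "(opt (m-3) j \<longrightarrow> j * M (m-3-j) = M (m-3)) \<and> (\<not> opt (m-3) j \<longrightarrow> 9 * j * M (m-3-j) \<le> 8 * M (m-3))"
      by (rule less.IH) (use True less.prems in auto)
    have e1: "M m = 3 * M (m-3)" using M_step[of "m-3"] True by simp
    have e2: "M (m-j) = 3 * M (m-3-j)"
    proof -
      have h: "m - j = (m-3-j) + 3" using True less.prems by simp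
      have "M ((m-3-j) + 3) = 3 * M (m-3-j)" using True less.prems by (intro M_step) simp
      thus ?thesis by (subst h)
    qed
    have e3: "opt m j = opt (m-3) j"
    proof -
      have mm: "m mod 3 = (m-3) mod 3"
      proof -
        have h: "m = (m-3)+3" using True by simp
        have "((m-3)+3) mod 3 = (m-3) mod 3" by simp
        thus ?thesis using h by metis
      qed
      have "m \<noteq> 1" "m \<noteq> 2" "m \<noteq> 4" "m-3 \<noteq> 1" "m-3 \<noteq> 2" "m-3 \<noteq> 4" "m \<ge> 7" "m-3 \<ge> 7" using True by simp_all
      thus ?thesis unfolding opt_def mm by simp
    qed
    show ?thesis using IH e1 e2 e3 by auto
  next
    case False
    hence "m \<le> 11" by simp
    then show ?thesis using less.prems base[of m j] by (simp add: P_def)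
  qed
qed

lemma opt_big: "8 \<le> j \<Longrightarrow> j \<le> m \<Longrightarrow> 9 * j * M (m-j) \<le> 8 * M m"
proof (induction j rule: less_induct)
  case (less j)
  have a: "9 * (j-3) * M (m-(j-3)) \<le> 8 * M m"
  proof (cases "j - 3 \<ge> 8")
    case True thus ?thesis using less.prems by (intro less.IH) auto
  next
    case False
    hence "1 \<le> j-3" "j-3 \<le> 7" "\<not> opt m (j-3)" using less.prems by (auto simp: opt_def)
    thus ?thesis using opt_small[of "j-3" m] less.prems by auto
  qed
  have "M (m-j) * 3 \<le> M (m-j+3)" using M_ge3[of "m-j"] by simp
  also have "m-j+3 = m-(j-3)" using less.prems by simp
  finally have b: "3 * M (m-j) \<le> M (m-(j-3))" by simp
  have "j \<le> 3*(j-3)" using less.prems by simp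
  hence "9 * j * M (m-j) \<le> 9 * (3*(j-3)) * M (m-j)" by (intro mult_le_mono) auto
  also have "\<dots> = 9 * (j-3) * (3 * M (m-j))" by (simp only: mult.assoc mult.left_commute)
  also have "\<dots> \<le> 9 * (j-3) * M (m-(j-3))" using b by (intro mult_le_mono) auto
  finally show ?case using a by linarith
qed

lemma opt_main:
  assumes "1 \<le> j" "j \<le> m"
  shows "opt m j \<Longrightarrow> j * M (m-j) = M m" and "\<not> opt m j \<Longrightarrow> 9 * j * M (m-j) \<le> 8 * M m"
proof -
  assume "opt m j" thus "j * M (m-j) = M m" using opt_small[OF assms(1) _ assms(2)] opt_le4[of m j] by auto
next
  assume "\<not> opt m j" thus "9 * j * M (m-j) \<le> 8 * M m"
    using opt_small[OF assms(1) _ assms(2)] opt_big[OF _ assms(2)] by (cases "j \<le> 7") auto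
qed

lemma jM_le: assumes "1 \<le> j" "j \<le> m" shows "j * M (m-j) \<le> M m"
  using opt_main[OF assms] by (cases "opt m j") auto




lemma opt_set:
  "m = 1 \<Longrightarrow> {j\<in>{1..m}. opt m j} = {1}"
  "m = 2 \<Longrightarrow> {j\<in>{1..m}. opt m j} = {2}"
  "m = 4 \<Longrightarrow> {j\<in>{1..m}. opt m j} = {2,4}"
  "m \<ge> 3 \<Longrightarrow> m mod 3 = 0 \<Longrightarrow> {j\<in>{1..m}. opt m j} = {3}"
  "m \<ge> 5 \<Longrightarrow> m mod 3 = 2 \<Longrightarrow> {j\<in>{1..m}. opt m j} = {2,3}"
  "m \<ge> 7 \<Longrightarrow> m mod 3 = 1 \<Longrightarrow> {j\<in>{1..m}. opt m j} = {2,3,4}"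
  by (auto simp: opt_def)

lemma opt_sum_gen: "(\<Sum>j=1..m. if opt m j then f (m-j) else 0) = (\<Sum>j\<in>{j\<in>{1..m}. opt m j}. f (m-j))"
  by (rule sum.inter_filter[symmetric]) simp

lemma opt_sum:
  fixes f :: "nat \<Rightarrow> real"
  shows "m = 1 \<Longrightarrow> (\<Sum>j=1..m. if opt m j then f (m-j) else 0) = f 0"
  "m = 2 \<Longrightarrow> (\<Sum>j=1..m. if opt m j then f (m-j) else 0) = f 0"
  "m = 4 \<Longrightarrow> (\<Sum>j=1..m. if opt m j then f (m-j) else 0) = f 2 + f 0"
  "m \<ge> 3 \<Longrightarrow> m mod 3 = 0 \<Longrightarrow> (\<Sum>j=1..m. if opt m j then f (m-j) else 0) = f (m-3)"
  "m \<ge> 5 \<Longrightarrow> m mod 3 = 2 \<Longrightarrow> (\<Sum>j=1..m. if opt m j then f (m-j) else 0) = f (m-2) + f (m-3)"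
  "m \<ge> 7 \<Longrightarrow> m mod 3 = 1 \<Longrightarrow> (\<Sum>j=1..m. if opt m j then f (m-j) else 0) = f (m-2) + f (m-3) + f (m-4)"
  by (simp_all only: opt_sum_gen opt_set) simp_all

definition pp :: "nat \<Rightarrow> real" where
  "pp m = (if m \<le> 1 then 1 else if m mod 3 = 0 then 1
           else if m mod 3 = 2 then real (m div 3 + 1)
           else real (m div 3) * (real (m div 3) + 3) / 2)"

lemma pp0: "pp (3*k) = 1" by (simp add: pp_def)
lemma pp2: "pp (3*k+2) = real k + 1"
proof -
  have h: "(3*k+2) mod 3 = 2" "(3*k+2) div 3 = k" "\<not> 3*k+2 \<le> 1" by presburger+
  show ?thesis unfolding pp_def h by simp
qed
lemma pp4: "pp (3*k+4) = (real k + 1) * (real k + 4) / 2"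
proof -
  have h: "(3*k+4) mod 3 = 1" "(3*k+4) div 3 = k + 1" "\<not> 3*k+4 \<le> 1" by presburger+
  show ?thesis unfolding pp_def h by (simp add: algebra_simps)
qed

lemma mod3_cases: fixes m :: nat obtains k where "m = 3*k" | k where "m = 3*k+2" | "m = 1" | k where "m = 3*k+4"
proof -
  obtain k r where m: "m = 3*k + r" "r < 3" using div_mod_decomp[of m 3] mod_less_divisor[of 3 m] by (metis mult.commute zero_less_numeral)
  consider "r = 0" | "r = 1" | "r = 2" using m by linarith
  thus ?thesis
  proof cases
    case 1 thus ?thesis using that m by simp
  next
    case 2 show ?thesis
    proof (cases k)
      case 0 thus ?thesis using that m 2 by simp
    next
      case (Suc k') hence "m = 3*k'+4" using m 2 by simp
      thus ?thesis using that by blast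
    qed
  next
    case 3 thus ?thesis using that m by simp
  qed
qed

lemma pp_sum: assumes "m \<ge> 1" shows "(\<Sum>j=1..m. if opt m j then pp (m-j) else 0) = pp m"
proof (cases m rule: mod3_cases)
  case (1 k)
  hence "m \<ge> 3" "m mod 3 = 0" using assms by auto
  hence "(\<Sum>j=1..m. if opt m j then pp (m-j) else 0) = pp (m-3)" by (rule opt_sum)
  moreover have "m - 3 = 3*(k-1)" using 1 by simp
  ultimately show ?thesis using 1 by (simp add: pp0)
next
  case (2 k)
  show ?thesis
  proof (cases k)
    case 0 thus ?thesis using 2 opt_sum(2)[of m pp] by (simp add: pp_def)
  next
    case (Suc k')
    hence "m \<ge> 5" "m mod 3 = 2" using 2 by auto
    hence "(\<Sum>j=1..m. if opt m j then pp (m-j) else 0) = pp (m-2) + pp (m-3)" by (rule opt_sum)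
    moreover have a: "m - 2 = 3*(k'+1)" "m - 3 = 3*k'+2" using 2 Suc by auto
    moreover have "pp (m-2) = 1" unfolding a by (rule pp0)
    moreover have "pp (m-3) = real k' + 1" unfolding a by (rule pp2)
    moreover have "pp m = real k + 1" unfolding 2 by (rule pp2)
    ultimately show ?thesis using Suc by simp
  qed
next
  case 3 thus ?thesis using opt_sum(1)[of m pp] by (simp add: pp_def)
next
  case (4 k)
  show ?thesis
  proof (cases k)
    case 0 thus ?thesis using 4 opt_sum(3)[of m pp] by (simp add: pp_def)
  next
    case (Suc k')
    hence "m \<ge> 7" "m mod 3 = 1" using 4 by auto
    hence "(\<Sum>j=1..m. if opt m j then pp (m-j) else 0) = pp (m-2) + pp (m-3) + pp (m-4)" by (rule opt_sum)
    moreover have a: "m - 2 = 3*(k'+1)+2" "m - 3 = 3*k'+4" "m - 4 = 3*(k'+1)" using 4 Suc by auto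
    moreover have "pp (m-2) = real (k'+1) + 1" unfolding a by (rule pp2)
    moreover have "pp (m-3) = (real k' + 1) * (real k' + 4) / 2" unfolding a by (rule pp4)
    moreover have "pp (m-4) = 1" unfolding a by (rule pp0)
    moreover have "pp m = (real k + 1) * (real k + 4) / 2" unfolding 4 by (rule pp4)
    ultimately show ?thesis using Suc by (simp add: field_simps)
  qed
qed

lemma pow_sum: assumes "m \<ge> 1" shows "(\<Sum>j=1..m. if opt m j then (3::real) ^ (m-j) else 0) \<le> 3 ^ (m-1)"
proof (cases m rule: mod3_cases)
  case (1 k)
  hence "m \<ge> 3" "m mod 3 = 0" using assms by auto
  hence "(\<Sum>j=1..m. if opt m j then (3::real) ^ (m-j) else 0) = 3 ^ (m-3)" by (rule opt_sum)
  also have "\<dots> \<le> 3 ^ (m-1)" by (intro power_increasing) auto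
  finally show ?thesis .
next
  case (2 k)
  show ?thesis
  proof (cases k)
    case 0 thus ?thesis using 2 opt_sum(2)[of m "\<lambda>i. (3::real)^i"] by simp
  next
    case (Suc k')
    hence "m \<ge> 5" "m mod 3 = 2" using 2 by auto
    hence "(\<Sum>j=1..m. if opt m j then (3::real) ^ (m-j) else 0) = 3 ^ (m-2) + 3 ^ (m-3)" by (rule opt_sum)
    moreover have "m - 2 = Suc (m-3)" "m - 1 = Suc (Suc (m-3))" using \<open>m \<ge> 5\<close> by auto
    ultimately show ?thesis by simp
  qed
next
  case 3 thus ?thesis using opt_sum(1)[of m "\<lambda>i. (3::real)^i"] by simp
next
  case (4 k)
  show ?thesis
  proof (cases k)
    case 0 thus ?thesis using 4 opt_sum(3)[of m "\<lambda>i. (3::real)^i"] by simp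
  next
    case (Suc k')
    hence "m \<ge> 7" "m mod 3 = 1" using 4 by auto
    hence "(\<Sum>j=1..m. if opt m j then (3::real) ^ (m-j) else 0) = 3 ^ (m-2) + 3 ^ (m-3) + 3 ^ (m-4)" by (rule opt_sum)
    moreover have "m - 2 = Suc (Suc (m-4))" "m - 3 = Suc (m-4)" "m - 1 = Suc (Suc (Suc (m-4)))" using \<open>m \<ge> 7\<close> by auto
    ultimately show ?thesis by simp
  qed
qed




abbreviation q :: "nat \<Rightarrow> nat \<Rightarrow> real" where "q d m \<equiv> qg (sigma d) m"

lemma q_ge1: "q d m \<ge> 1"
proof (induction m rule: less_induct)
  case (less m)
  show ?case
  proof (cases "m = 0")
    case True thus ?thesis by (simp add: qg_0)
  next
    case False
    have nn: "0 \<le> sigma d j * q d (m-j)" if "j \<in> {1..m}" for j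
    proof -
      have "1 \<le> q d (m-j)" using that by (intro less.IH) auto
      thus ?thesis by (intro mult_nonneg_nonneg sigma_nonneg) auto
    qed
    have "sigma d 1 * q d (m-1) \<le> (\<Sum>j=1..m. sigma d j * q d (m-j))"
      by (rule member_le_sum[where f="\<lambda>j. sigma d j * q d (m-j)"]) (use False nn in auto)
    moreover have "sigma d 1 \<ge> 1" using sigma_ge[of 1 d] by simp
    moreover have "q d (m-1) \<ge> 1" using less False by simp
    ultimately have "1 \<le> (\<Sum>j=1..m. sigma d j * q d (m-j))"
      by (smt (verit, ccfv_SIG) mult_le_cancel_right1)
    thus ?thesis using qg_rec[of m "sigma d"] False by simp
  qed
qed

lemma q_nonneg: "q d m \<ge> 0" using q_ge1[of d m] by simp

lemma q_terms_nonneg: "0 \<le> sigma d j * q d (m-j)"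
  by (intro mult_nonneg_nonneg sigma_nonneg q_nonneg)

lemma q_ge_term: assumes "1 \<le> j" "j \<le> m" shows "sigma d j * q d (m-j) \<le> q d m"
proof -
  have "sigma d j * q d (m-j) \<le> (\<Sum>j=1..m. sigma d j * q d (m-j))"
    by (rule member_le_sum[where f="\<lambda>j. sigma d j * q d (m-j)"]) (use assms q_terms_nonneg in auto)
  thus ?thesis using qg_rec[of m "sigma d"] assms by simp
qed

lemma q_ge_2terms: assumes "1 \<le> i" "i < j" "j \<le> m"
  shows "sigma d i * q d (m-i) + sigma d j * q d (m-j) \<le> q d m"
proof -
  have "(\<Sum>l\<in>{i,j}. sigma d l * q d (m-l)) \<le> (\<Sum>l=1..m. sigma d l * q d (m-l))"
    by (rule sum_mono2) (use assms q_terms_nonneg in auto)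
  thus ?thesis using qg_rec[of m "sigma d"] assms by simp
qed

lemma low0: "q d (3*k) \<ge> (3^d)^k"
proof (induction k)
  case 0 thus ?case by (simp add: qg_0)
next
  case (Suc k)
  have "sigma d 3 * q d (3*k+3-3) \<le> q d (3*k+3)" by (rule q_ge_term) auto
  moreover have "(3::real)^d \<le> sigma d 3" using sigma_ge[of 3 d] by simp
  ultimately have "3^d * q d (3*k) \<le> q d (3*k+3)"
    by (smt (verit) mult_right_mono q_nonneg diff_add_inverse2)
  moreover have "3^d * (3^d)^k \<le> 3^d * q d (3*k)" using Suc by (intro mult_left_mono) auto
  ultimately have "3^d * (3^d)^k \<le> q d (3*k+3)" by linarith
  thus ?case by (simp add: algebra_simps)
qed

lemma low2: "q d (3*k+2) \<ge> (real k + 1) * 2^d * (3^d)^k"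
proof (induction k)
  case 0
  have "sigma d 2 * q d (2-2) \<le> q d 2" by (rule q_ge_term) auto
  moreover have "(2::real)^d \<le> sigma d 2" using sigma_ge[of 2 d] by simp
  ultimately have "2^d \<le> q d 2" by (simp add: qg_0)
  thus ?case by (simp add: numeral_2_eq_2)
next
  case (Suc k)
  have e: "3*k+5-2 = 3*k+3" "3*k+5-3 = 3*k+2" by simp_all
  have h: "sigma d 2 * q d (3*k+3) + sigma d 3 * q d (3*k+2) \<le> q d (3*k+5)"
    by (rule q_ge_2terms[of 2 3 "3*k+5" d, unfolded e]) auto
  have "(2::real)^d \<le> sigma d 2" "(3::real)^d \<le> sigma d 3" using sigma_ge[of 2 d] sigma_ge[of 3 d] by simp_all
  moreover have "q d (3*k+3) \<ge> (3^d)^(k+1)" using low0[of d "k+1"] by (simp add: algebra_simps)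
  ultimately have "2^d * (3^d)^(k+1) + 3^d * ((real k + 1) * 2^d * (3^d)^k) \<le> q d (3*k+5)"
    using h Suc by (smt (verit) mult_mono zero_le_power q_nonneg mult_nonneg_nonneg of_nat_0_le_iff)
  thus ?case by (simp add: algebra_simps)
qed

definition B :: "nat \<Rightarrow> real" where "B m = (if m = 0 then 1 else 2*3^(m-1))"

lemma B_nonneg: "B m \<ge> 0" by (simp add: B_def)

lemma sumB_Suc: "(\<Sum>j=1..Suc m. B (Suc m - j)) = 3^m"
proof (induction m)
  case 0 thus ?case by (simp add: B_def)
next
  case (Suc m)
  have "(\<Sum>j=1..Suc (Suc m). B (Suc (Suc m) - j)) = B (Suc m) + (\<Sum>j=Suc 1..Suc (Suc m). B (Suc (Suc m) - j))"
    by (simp add: sum.atLeast_Suc_atMost)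
  also have "(\<Sum>j=Suc 1..Suc (Suc m). B (Suc (Suc m) - j)) = (\<Sum>j=1..Suc m. B (Suc m - j))"
    by (simp only: sum.shift_bounds_cl_Suc_ivl) simp
  finally show ?case using Suc by (simp add: B_def)
qed

lemma sumB: "m \<ge> 1 \<Longrightarrow> (\<Sum>j=1..m. B (m - j)) = 3^(m-1)"
  using sumB_Suc[of "m-1"] by simp

lemma powM: assumes "1 \<le> j" "j \<le> m"
  shows "real j ^ d * real (M (m-j)) ^ d \<le> real (M m) ^ d"
proof -
  have "real j * real (M (m-j)) \<le> real (M m)" using jM_le[OF assms] by (metis of_nat_le_iff of_nat_mult)
  hence "(real j * real (M (m-j))) ^ d \<le> real (M m) ^ d" by (intro power_mono) auto
  thus ?thesis by (simp add: power_mult_distrib)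
qed

lemma crude:
  assumes "\<And>j. 1 \<le> j \<Longrightarrow> j \<le> N \<Longrightarrow> j \<le> 2^d" "m \<le> N"
  shows "q d m \<le> B m * real (M m) ^ d"
  using assms(2)
proof (induction m rule: less_induct)
  case (less m)
  show ?case
  proof (cases "m = 0")
    case True thus ?thesis by (simp add: qg_0 B_def)
  next
    case False
    have "q d m = (\<Sum>j=1..m. sigma d j * q d (m-j))" using qg_rec[of m "sigma d"] False by simp
    also have "\<dots> \<le> (\<Sum>j=1..m. 2 * B (m-j) * real (M m) ^ d)"
    proof (rule sum_mono)
      fix j assume j: "j \<in> {1..m}"
      have s: "sigma d j \<le> 2 * real j ^ d" using j less.prems assms(1)[of j] by (intro sigma_le2) auto
      have ih: "q d (m-j) \<le> B (m-j) * real (M (m-j)) ^ d" using j less by (intro less.IH) auto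
      have "sigma d j * q d (m-j) \<le> (2 * real j ^ d) * (B (m-j) * real (M (m-j)) ^ d)"
        by (intro mult_mono s ih) (auto intro: q_nonneg)
      also have "\<dots> = 2 * B (m-j) * (real j ^ d * real (M (m-j)) ^ d)" by simp
      also have "\<dots> \<le> 2 * B (m-j) * real (M m) ^ d"
        using powM[of j m d] j by (intro mult_left_mono) (auto simp: B_nonneg)
      finally show "sigma d j * q d (m-j) \<le> 2 * B (m-j) * real (M m) ^ d" .
    qed
    also have "\<dots> = 2 * real (M m) ^ d * (\<Sum>j=1..m. B (m-j))"
      by (simp add: sum_distrib_left algebra_simps)
    also have "\<dots> = B m * real (M m) ^ d" using False sumB[of m] by (simp add: B_def[of m])
    finally show ?thesis .
  qed
qed

lemma refined:
  assumes "\<And>j. 1 \<le> j \<Longrightarrow> j \<le> N \<Longrightarrow> j \<le> 2^d" "4 * (1/2)^d \<le> (8/9::real)^d" "m \<le> N"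
  shows "q d m \<le> (pp m + (8/9)^d * 3^m) * real (M m) ^ d"
  using assms(3)
proof (induction m rule: less_induct)
  case (less m)
  define e where "e = (8/9::real)^d"
  have e0: "e \<ge> 0" by (simp add: e_def)
  show ?case
  proof (cases "m = 0")
    case True thus ?thesis by (simp add: qg_0 pp_def)
  next
    case False
    define Mm where "Mm = real (M m) ^ d"
    have Mm0: "Mm \<ge> 0" by (simp add: Mm_def)
    have "q d m = (\<Sum>j=1..m. sigma d j * q d (m-j))" using qg_rec[of m "sigma d"] False by simp
    also have "\<dots> \<le> (\<Sum>j=1..m. ((if opt m j then pp (m-j) else 0) + e * (if opt m j then 3^(m-j) else 0)
                          + e * (2 * B (m-j))) * Mm)"
    proof (rule sum_mono)
      fix j assume j: "j \<in> {1..m}"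
      have jN: "j \<le> 2^d" using j less.prems assms(1)[of j] by auto
      have cr: "q d (m-j) \<le> B (m-j) * real (M (m-j)) ^ d" using j less.prems by (intro crude[OF assms(1)]) auto
      show "sigma d j * q d (m-j) \<le> ((if opt m j then pp (m-j) else 0) + e * (if opt m j then 3^(m-j) else 0)
                          + e * (2 * B (m-j))) * Mm"
      proof (cases "opt m j")
        case True
        have eqM: "real j ^ d * real (M (m-j)) ^ d = Mm"
          using opt_main(1)[of j m] True j unfolding Mm_def by (metis atLeastAtMost_iff of_nat_mult power_mult_distrib)
        have j4: "real j \<le> 4" using opt_le4[OF True] by simp
        have ih: "q d (m-j) \<le> (pp (m-j) + e * 3^(m-j)) * real (M (m-j)) ^ d"
          using j less unfolding e_def by (intro less.IH) auto
        have s: "sigma d j \<le> real j ^ d + real j * (real j / 2) ^ d" using j by (intro sigma_le) auto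
        have "sigma d j * q d (m-j) \<le> (real j ^ d + real j * (real j / 2) ^ d) * q d (m-j)"
          by (intro mult_right_mono s q_nonneg)
        also have "\<dots> = real j ^ d * q d (m-j) + real j * (1/2)^d * (real j ^ d * q d (m-j))"
          by (simp add: algebra_simps power_divide)
        also have "\<dots> \<le> real j ^ d * ((pp (m-j) + e * 3^(m-j)) * real (M (m-j)) ^ d)
              + real j * (1/2)^d * (real j ^ d * (B (m-j) * real (M (m-j)) ^ d))"
          by (intro add_mono mult_left_mono ih cr) auto
        also have "\<dots> = (pp (m-j) + e * 3^(m-j)) * Mm + real j * (1/2)^d * B (m-j) * Mm"
          unfolding eqM[symmetric] by (simp add: algebra_simps)
        also have "real j * (1/2)^d * B (m-j) * Mm \<le> e * B (m-j) * Mm"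
        proof -
          have "real j * (1/2)^d \<le> 4 * (1/2)^d" using j4 by (intro mult_right_mono) auto
          also have "\<dots> \<le> e" using assms(2) unfolding e_def .
          finally show ?thesis using B_nonneg Mm0 by (intro mult_right_mono) auto
        qed
        also have "e * B (m-j) * Mm \<le> e * (2 * B (m-j)) * Mm"
          using e0 B_nonneg[of "m-j"] Mm0 by (intro mult_right_mono mult_left_mono) auto
        finally show ?thesis using True by (simp add: algebra_simps)
      next
        case False
        have s: "sigma d j \<le> 2 * real j ^ d" using j jN by (intro sigma_le2) auto
        have le: "9 * (j * M (m-j)) \<le> 8 * M m" using opt_main(2)[of j m] False j by auto
        have "real j * real (M (m-j)) \<le> (8/9) * real (M m)"
          using le by (simp add: field_simps) (metis of_nat_le_iff of_nat_mult of_nat_numeral)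
        hence "(real j * real (M (m-j))) ^ d \<le> ((8/9) * real (M m)) ^ d" by (intro power_mono) auto
        hence pw: "real j ^ d * real (M (m-j)) ^ d \<le> e * Mm" unfolding e_def Mm_def by (simp only: power_mult_distrib)
        have "sigma d j * q d (m-j) \<le> (2 * real j ^ d) * (B (m-j) * real (M (m-j)) ^ d)"
          by (intro mult_mono s cr) (auto intro: q_nonneg)
        also have "\<dots> = 2 * B (m-j) * (real j ^ d * real (M (m-j)) ^ d)" by simp
        also have "\<dots> \<le> 2 * B (m-j) * (e * Mm)" using pw B_nonneg[of "m-j"] by (intro mult_left_mono) auto
        finally show ?thesis using False by (simp add: algebra_simps)
      qed
    qed
    also have "\<dots> = ((\<Sum>j=1..m. if opt m j then pp (m-j) else 0) + e * (\<Sum>j=1..m. if opt m j then 3^(m-j) else 0)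
                      + 2 * e * (\<Sum>j=1..m. B (m-j))) * Mm"
      by (simp add: sum.distrib sum_distrib_left sum_distrib_right algebra_simps)
    also have "\<dots> \<le> (pp m + e * 3^(m-1) + 2 * e * 3^(m-1)) * Mm"
      using pp_sum[of m] pow_sum[of m] sumB[of m] False e0 Mm0
      by (intro mult_right_mono add_mono) (auto intro: mult_left_mono)
    also have "\<dots> = (pp m + e * 3^m) * Mm" using False
      by (cases m) (simp_all add: algebra_simps)
    finally show ?thesis unfolding e_def Mm_def .
  qed
qed




lemma lt_pow3: "n < (3::nat)^n"
  by (induction n) auto

lemma pow3_bound: "3 \<le> n \<Longrightarrow> 2*(n+2) \<le> (3::nat)^n"
proof (induction n rule: nat_induct_at_least)
  case base show ?case by simp
next
  case (Suc m) thus ?case by simp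
qed

lemma Mpow: "real (c * 3^i) ^ d = real c ^ d * ((3::real)^d)^i"
  by (simp add: power_mult_distrib power_mult[symmetric] mult.commute)

lemma log_lt: assumes "log (9/8) x < real d" "x > 0" shows "x < (9/8::real)^d"
  using log_less_iff[of "9/8" x "real d"] assms by (simp add: powr_realpow)

lemma hyp_conv:
  fixes n d :: nat
  assumes "n \<ge> 3" "real d > Dsigma n"
  shows "n mod 3 = 0 \<Longrightarrow> 3^(2*n) < (9/8::real)^d"
    and "n mod 3 = 1 \<Longrightarrow> 3^(2*n+1) / (real n + 2) < (9/8::real)^d"
    and "2 * 3^(n+1) < (9/8::real)^d"
proof -
  have l3: "log (9/8) (3^k) = real k * log (9/8) 3" for k :: nat by (simp add: log_nat_power)
  show c0: "3^(2*n) < (9/8::real)^d" if "n mod 3 = 0"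
  proof -
    have "Dsigma n = log (9/8) (3^(2*n))" using that unfolding Dsigma_def l3 by simp
    thus ?thesis using assms by (intro log_lt) auto
  qed
  show c1: "3^(2*n+1) / (real n + 2) < (9/8::real)^d" if "n mod 3 = 1"
  proof -
    have "log (9/8) (3^(2*n+1) / (real n + 2)) = log (9/8) (3^(2*n+1)) - log (9/8) (real n + 2)"
      by (rule log_divide_pos) auto
    also have "log (9/8) (3^(2*n+1)) = real (2*n+1) * log (9/8) 3" by (rule l3)
    finally have "Dsigma n = log (9/8) (3^(2*n+1) / (real n + 2))" using that unfolding Dsigma_def
      by simp
    thus ?thesis using assms by (intro log_lt) auto
  qed
  show "2 * 3^(n+1) < (9/8::real)^d"
  proof -
    consider "n mod 3 = 0" | "n mod 3 = 1" | "n mod 3 = 2" by linarith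
    thus ?thesis
    proof cases
      case 1
      have "(3::real)^(n+1) * 2 \<le> 3^(n+1) * 3^(n-1)"
      proof (intro mult_left_mono)
        have "(3::real)^2 \<le> 3^(n-1)" using assms(1) by (intro power_increasing) auto
        thus "2 \<le> (3::real)^(n-1)" by simp
      qed simp
      also have "\<dots> = 3^(2*n)"
      proof -
        have ee: "(n+1)+(n-1) = 2*n" using assms(1) by simp
        show ?thesis by (metis ee power_add)
      qed
      finally show ?thesis using c0[OF 1] by simp
    next
      case 2
      have "real (2*(n+2)) \<le> real (3^n)" using pow3_bound[OF assms(1)] by (simp only: of_nat_le_iff)
      hence n2: "2 * (real n + 2) \<le> 3^n" by simp
      have "3^(n+1) * (2 * (real n + 2)) \<le> 3^(n+1) * 3^n" by (rule mult_left_mono[OF n2]) simp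
      hence "2 * 3^(n+1) * (real n + 2) \<le> 3^(n+1) * 3^n" by (simp only: mult_ac)
      also have "\<dots> = 3^(2*n+1)" by (simp add: power_add[symmetric])
      finally have "2 * 3^(n+1) \<le> 3^(2*n+1) / (real n + 2)" by (simp add: field_simps)
      thus ?thesis using c1[OF 2] by simp
    next
      case 3
      show ?thesis
      proof (cases "n = 5")
        case True
        have "Dsigma n = log (9/8) 3888" using True unfolding Dsigma_def by simp
        hence "3888 < (9/8::real)^d" using assms by (intro log_lt) auto
        thus ?thesis using True by simp
      next
        case False
        have "log (9/8) (2 * 3^(n+1)) = log (9/8) 2 + log (9/8) (3^(n+1))" by (rule log_mult_pos) auto
        also have "log (9/8) (3^(n+1)) = real (n+1) * log (9/8) 3" by (rule l3)
        finally have "Dsigma n = log (9/8) (2 * 3^(n+1))" using 3 False unfolding Dsigma_def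
          by simp
        thus ?thesis using assms by (intro log_lt) auto
      qed
    qed
  qed
qed


lemma pow_mul: "i + j = k \<Longrightarrow> (x::real)^i * x^j = x^k" by (simp add: power_add[symmetric])

lemma ratio_iff: fixes x y z :: real assumes "x > 0" "y > 0" shows "z / (x * y) < 1 \<longleftrightarrow> z < x * y"
  using assms by (simp add: divide_less_eq)

theorem corollary2:
  fixes n d :: nat
  assumes "n \<ge> 3" and "real d > Dsigma n"
  shows "(qg (sigma d) n)^2 / (qg (sigma d) (n - 1) * qg (sigma d) (n + 1)) < 1
         \<longleftrightarrow> n mod 3 = 1"
proof -
  define a where "a = (2::real)^d"
  define b where "b = (3::real)^d"
  define E where "E = (9/8::real)^d"
  define ep where "ep = (8/9::real)^d"
  have Hall: "2 * 3^(n+1) < E" using hyp_conv(3)[OF assms] unfolding E_def .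
  have a0: "a > 0" and b0: "b > 0" unfolding a_def b_def by simp_all
  have bE: "b^2 = E * a^3"
  proof -
    have a3: "a^3 = (2^3)^d" unfolding a_def by (metis mult.commute power_mult)
    have b2: "b^2 = (3^2)^d" unfolding b_def by (metis mult.commute power_mult)
    have "E * a^3 = ((9/8) * 2^3)^d" unfolding E_def a3 by (simp only: power_mult_distrib)
    also have "\<dots> = (3^2)^d" by simp
    finally show ?thesis unfolding b2 by simp
  qed
  have a4: "real 4 ^ d = a^2"
  proof -
    have "a^2 = (2^2)^d" unfolding a_def by (metis mult.commute power_mult)
    thus ?thesis by simp
  qed
  have epE: "ep * E = 1" unfolding ep_def E_def by (simp add: power_mult_distrib[symmetric])
  have d3: "d \<ge> 3"
  proof (rule ccontr)
    assume "\<not> d \<ge> 3" hence "d \<le> 2" by simp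
    hence "E \<le> (9/8)^2" unfolding E_def by (intro power_increasing) auto
    moreover have "(3::real)^(n+1) \<ge> 1" by (rule one_le_power) simp
    ultimately show False using Hall by (simp add: power2_eq_square)
  qed
  have four: "4 * (1/2)^d \<le> (8/9::real)^d"
  proof -
    have "(16/9::real)^3 \<le> (16/9)^d" using d3 by (intro power_increasing) auto
    moreover have "(4::real) \<le> (16/9)^3" by (simp add: power3_eq_cube)
    ultimately have "4 \<le> (16/9::real)^d" by linarith
    hence "4 * (1/2)^d \<le> (16/9::real)^d * (1/2)^d" by (intro mult_right_mono) auto
    also have "\<dots> = (8/9)^d" by (simp add: power_mult_distrib[symmetric])
    finally show ?thesis .
  qed
  have jN: "j \<le> 2^d" if "1 \<le> j" "j \<le> n+1" for j
  proof -
    have "real j \<le> real (n+1)" using that by simp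
    also have "\<dots> < real (3^(n+1))" using lt_pow3[of "n+1"] by (simp only: of_nat_less_iff)
    also have "\<dots> \<le> 2 * 3^(n+1)" by simp
    also have "\<dots> < E" by (rule Hall)
    also have "E \<le> a" unfolding E_def a_def by (intro power_mono) auto
    finally have "real j < real (2^d)" unfolding a_def by simp
    thus ?thesis by simp
  qed
  note cr = crude[where N="n+1" and d=d, OF jN]
  note rf = refined[where N="n+1" and d=d, OF jN four]
  have qpos: "q d m > 0" for m using q_ge1[of d m] by simp
  have iff: "(q d n)^2 / (q d (n-1) * q d (n+1)) < 1 \<longleftrightarrow> (q d n)^2 < q d (n-1) * q d (n+1)"
    by (rule ratio_iff) (rule qpos)+
  show ?thesis
  proof (cases n rule: mod3_cases)
    case (1 k)
    then obtain k' where k: "k = k'+1" using assms(1) by (cases k) auto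
    define t where "t = b^k'"
    have t0: "t > 0" unfolding t_def using b0 by simp
    have n1: "n - 1 = 3*k'+2" "n + 1 = 3*k'+4" "n = 3*(k'+1)" using 1 k by auto
    have Qm: "q d (n-1) \<le> 2*3^(3*k'+1) * (a*t)"
    proof -
      have "q d (n-1) \<le> B (3*k'+2) * real (M (3*k'+2)) ^ d" unfolding n1(1) by (rule cr) (use n1 in auto)
      also have "\<dots> = 2*3^(3*k'+1) * (a*t)" unfolding M_closed Mpow B_def a_def t_def b_def by simp
      finally show ?thesis .
    qed
    have Qp: "q d (n+1) \<le> 2*3^(3*k'+3) * (a^2*t)"
    proof -
      have "q d (n+1) \<le> B (3*k'+4) * real (M (3*k'+4)) ^ d" unfolding n1(2) by (rule cr) (use n1 in auto)
      also have "\<dots> = 2*3^(3*k'+3) * (a^2*t)" unfolding M_closed Mpow B_def a4 t_def b_def by simp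
      finally show ?thesis .
    qed
    have Q0: "b*t \<le> q d n" using low0[of d "k'+1"] unfolding n1 t_def b_def by simp
    have "q d (n-1) * q d (n+1) \<le> (2*3^(3*k'+1) * (a*t)) * (2*3^(3*k'+3) * (a^2*t))"
      by (intro mult_mono Qm Qp) (use a0 t0 in \<open>auto intro!: mult_nonneg_nonneg q_nonneg\<close>)
    also have "\<dots> = 4*((3::real)^(3*k'+1)*3^(3*k'+3)) * (a^3*t^2)" by (simp add: algebra_simps power2_eq_square power3_eq_cube)
    also have "\<dots> = (4*3^(6*k'+4)) * (a^3*t^2)" using pow_mul[of "3*k'+1" "3*k'+3" "6*k'+4" 3] by simp
    also have "\<dots> \<le> E * (a^3*t^2)"
    proof (intro mult_right_mono)
      have "(4::real)*3^(6*k'+4) \<le> 9*3^(6*k'+4)" by simp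
      also have "\<dots> = 3^(2*n)" unfolding n1(3) using pow_mul[of 2 "6*k'+4" "2*(3*(k'+1))" 3] by simp
      also have "\<dots> < E" using hyp_conv(1)[OF assms] n1 unfolding E_def by simp
      finally show "4*3^(6*k'+4) \<le> E" by simp
    qed (use a0 t0 in simp)
    also have "\<dots> = (b*t)^2" using bE by (simp add: power_mult_distrib)
    also have "\<dots> \<le> (q d n)^2" using Q0 b0 t0 by (intro power_mono) auto
    finally have "\<not> (q d n)^2 < q d (n-1) * q d (n+1)" by simp
    moreover have "n mod 3 \<noteq> 1" using 1 by simp
    ultimately show ?thesis using iff by simp
  next
    case (2 k)
    then obtain k' where k: "k = k'+1" using assms(1) by (cases k) auto
    define t where "t = b^k'"
    have t0: "t > 0" unfolding t_def using b0 by simp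
    have n1: "n - 1 = 3*k'+4" "n + 1 = 3*(k'+2)" "n = 3*(k'+1)+2" using 2 k by auto
    define e where "e = ep * 3^(3*k'+6)"
    have e0: "e \<ge> 0" unfolding e_def ep_def by simp
    have ehalf: "2 * e < 1"
    proof -
      have "ep * (2 * 3^(n+1)) < ep * E" using Hall by (intro mult_strict_left_mono) (auto simp: ep_def)
      thus ?thesis using epE unfolding e_def n1 by (simp add: algebra_simps)
    qed
    define p1 where "p1 = (real k' + 1) * (real k' + 4) / 2"
    have p10: "p1 \<ge> 0" unfolding p1_def by simp
    have Qm: "q d (n-1) \<le> (p1 + e/9) * (a^2*t)"
    proof -
      have "q d (n-1) \<le> (pp (3*k'+4) + (8/9)^d * 3^(3*k'+4)) * real (M (3*k'+4)) ^ d"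
        unfolding n1(1) by (rule rf) (use n1 in auto)
      also have "\<dots> = (p1 + e/9) * (a^2*t)" unfolding M_closed Mpow pp4 a4 t_def b_def e_def ep_def p1_def
        by (simp add: power_add)
      finally show ?thesis .
    qed
    have Qp: "q d (n+1) \<le> (1 + e) * (b^2*t)"
    proof -
      have "q d (n+1) \<le> (pp (3*(k'+2)) + (8/9)^d * 3^(3*(k'+2))) * real (M (3*(k'+2))) ^ d"
        unfolding n1(2) by (rule rf) (use n1 in auto)
      also have "\<dots> = (1 + e) * (b^2*t)"
      proof -
        have "(3::real)^(d*2) = (3^2)^d" by (metis mult.commute power_mult)
        hence h9: "(3::real)^(d*2) = 9^d" by simp
        show ?thesis unfolding M_closed pp0 t_def b_def e_def ep_def
          by (simp add: power_add power_mult[symmetric] algebra_simps h9)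
      qed
      finally show ?thesis .
    qed
    have Q0: "(real k' + 2) * a * (b * t) \<le> q d n"
      using low2[where d=d and k="k'+1"] unfolding n1 t_def b_def a_def by (simp add: algebra_simps)
    have "q d (n-1) * q d (n+1) \<le> ((p1 + e/9) * (a^2*t)) * ((1 + e) * (b^2*t))"
      by (intro mult_mono Qm Qp) (use e0 p10 a0 t0 b0 in \<open>auto intro!: mult_nonneg_nonneg add_nonneg_nonneg q_nonneg\<close>)
    also have "\<dots> = ((p1 + e/9) * (1 + e)) * ((a*b*t)^2)" by (simp add: algebra_simps power2_eq_square)
    also have "\<dots> \<le> (real k' + 2)^2 * ((a*b*t)^2)"
    proof (intro mult_right_mono)
      have i1: "p1 + e/9 \<le> p1 + 1/18" using ehalf by linarith
      have i2: "1 + e \<le> 3/2" using ehalf by linarith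
      have "(p1 + e/9) * (1 + e) \<le> (p1 + 1/18) * (3/2)"
        by (rule mult_mono[OF i1 i2]) (use e0 p10 in linarith)+
      also have "\<dots> \<le> (real k' + 2)^2"
      proof -
        define K where "K = real k'"
        have K0: "0 \<le> K" "0 \<le> K*K" unfolding K_def by simp_all
        have "(p1 + 1/18) * (3/2) = (3*(K*K) + 15*K + 12)/4 + 1/12" unfolding p1_def K_def by (simp add: field_simps)
        also have "\<dots> \<le> (K+2)^2" unfolding power2_eq_square using K0 by (simp add: field_simps)
        finally show ?thesis unfolding K_def .
      qed
      finally show "(p1 + e/9) * (1 + e) \<le> (real k' + 2)^2" .
    qed simp
    also have "\<dots> = ((real k' + 2) * a * (b * t))^2" by (simp add: algebra_simps power2_eq_square)
    also have "\<dots> \<le> (q d n)^2" using Q0 a0 b0 t0 by (intro power_mono) auto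
    finally have "\<not> (q d n)^2 < q d (n-1) * q d (n+1)" by simp
    moreover have "n mod 3 \<noteq> 1" using 2 by presburger
    ultimately show ?thesis using iff by simp
  next
    case 3 thus ?thesis using assms(1) by simp
  next
    case (4 k)
    define t where "t = b^k"
    have t0: "t > 0" unfolding t_def using b0 by simp
    have n1: "n - 1 = 3*(k+1)" "n + 1 = 3*(k+1)+2" "n = 3*k+4" using 4 by auto
    have Q0: "q d n \<le> 2*3^(3*k+3) * (a^2*t)"
    proof -
      have "q d n \<le> B (3*k+4) * real (M (3*k+4)) ^ d" unfolding n1(3) by (rule cr) (use n1 in auto)
      also have "\<dots> = 2*3^(3*k+3) * (a^2*t)" unfolding M_closed Mpow B_def a4 t_def b_def by simp
      finally show ?thesis .
    qed
    have Qm: "b*t \<le> q d (n-1)" using low0[of d "k+1"] unfolding n1(1) t_def b_def by simp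
    have Qp: "(real k + 2) * a * (b*t) \<le> q d (n+1)"
      using low2[where d=d and k="k+1"] unfolding n1(2) t_def b_def a_def by (simp add: algebra_simps)
    have "(q d n)^2 \<le> (2*3^(3*k+3) * (a^2*t))^2" using Q0 qpos less_imp_le by (intro power_mono) auto
    also have "\<dots> = (4*3^(6*k+6)) * (a^4*t^2)" by (simp add: algebra_simps power_add[symmetric] power2_eq_square power4_eq_xxxx power_mult_distrib)
    also have "\<dots> < ((real k + 2) * E) * (a^4*t^2)"
    proof (intro mult_strict_right_mono)
      have "3^(2*n+1) / (real n + 2) < E" using hyp_conv(2)[OF assms] n1 unfolding E_def by simp
      hence "3^(2*n+1) < E * (real n + 2)" by (simp add: divide_less_eq)
      hence "3^(6*k+9) < E * (3 * (real k + 2))" unfolding n1 by (simp add: algebra_simps)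
      hence "27 * 3^(6*k+6) < 3 * ((real k + 2) * E)" by (simp add: power_add algebra_simps)
      moreover have "(0::real) < 3^(6*k+6)" by simp
      ultimately show "4*3^(6*k+6) < (real k + 2) * E" by linarith
    qed (use a0 t0 in simp)
    also have "\<dots> = (b*t) * ((real k + 2) * a * (b*t))"
    proof -
      have "(b*t) * ((real k + 2) * a * (b*t)) = (real k + 2) * a * t^2 * b^2" by (simp add: algebra_simps power2_eq_square)
      also have "\<dots> = (real k + 2) * a * t^2 * (E * a^3)" using bE by simp
      also have "\<dots> = ((real k + 2) * E) * (a^4*t^2)" by (simp add: algebra_simps power2_eq_square power3_eq_cube power4_eq_xxxx)
      finally show ?thesis by simp
    qed
    also have "\<dots> \<le> q d (n-1) * q d (n+1)"
      by (intro mult_mono Qm Qp) (use qpos less_imp_le a0 b0 t0 in auto)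
    finally have "(q d n)^2 < q d (n-1) * q d (n+1)" .
    moreover have "n mod 3 = 1" using 4 by presburger
    ultimately show ?thesis using iff by simp
  qed
qed


end
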